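(* Let $(\mathcal{A},e)$ be an order-unit space and $L$ a closed Lip-norm on $\mathcal{A}$. Let $\mathcal{K}=\{\tilde a\in\mathcal{A}/\mathbb{R}e: \tilde L(\tilde a)\le1\}$ and let $Af_0(\mathcal{K})$ be the Banach space of $\|\cdot\|^{\sim}$-continuous affine real functions on $\mathcal{K}$ vanishing at $0$, with the supremum norm. Each $\lambda\in\mathcal{A}'^0=\{\lambda\in\mathcal{A}':\lambda(e)=0\}$ defines a function $\tilde a\mapsto\lambda(a)$ on $\mathcal{K}$ belonging to $Af_0(\mathcal{K})$; the set of functions so obtained is dense in $Af_0(\mathcal{K})$ for the supremum norm.
   Context: An order-unit space is a real partially ordered vector space $\mathcal{A}$ with distinguished $e$ such that (i) for each $a$ there is $r$ with $a\le re$, and (ii) if $a\le re$ for all $r>0$ then $a\le0$; norm $\|a\|=\inf\{r\ge0:-re\le a\le re\}$ (not necessarily complete), with Banach dual $\mathcal{A}'$. $\|\tilde a\|^{\sim}=\inf_t\|a+te\|$ is the quotient norm on $\mathcal{A}/\mathbb{R}e$, and $\tilde L(\tilde a)=L(a)$. A Lip-norm is a finite-valued seminorm $L$ on $\mathcal{A}$ with: (1) $L(a)=0$ iff $a\in\mathbb{R}e$; (2) $\{a:L(a)\le1\}$ is norm-closed; (3) the image of $\{a:L(a)\le1\}$ in $\mathcal{A}/\mathbb{R}e$ is totally bounded for $\|\cdot\|^{\sim}$. $L$ is closed if $\{a:L(a)\le1\}$ is complete for the norm metric. *)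

theory Defs
  imports "HOL-Analysis.Analysis"
begin

(* The order-unit space is a type 'a of class ordered_real_vector (a real vector
   space with a partial order compatible with + and nonnegative scalar multiples);
   the distinguished element e is an order unit (Archimedean). *)
definition order_unit :: "'a::ordered_real_vector \<Rightarrow> bool" where
  "order_unit e \<longleftrightarrow>
     (\<forall>a. \<exists>r::real. a \<le> r *\<^sub>R e) \<and>
     (\<forall>a. (\<forall>r::real. r > 0 \<longrightarrow> a \<le> r *\<^sub>R e) \<longrightarrow> a \<le> 0)"

definition ou_norm :: "'a::ordered_real_vector \<Rightarrow> 'a \<Rightarrow> real" where
  "ou_norm e a = Inf {r. 0 \<le> r \<and> - (r *\<^sub>R e) \<le> a \<and> a \<le> r *\<^sub>R e}"

definition q_norm :: "'a::ordered_real_vector \<Rightarrow> 'a \<Rightarrow> real" where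
  "q_norm e a = Inf {ou_norm e (a + t *\<^sub>R e) | t. True}"

definition dual_space :: "'a::ordered_real_vector \<Rightarrow> ('a \<Rightarrow> real) set" where
  "dual_space e = {l. linear l \<and> (\<exists>C. \<forall>a. \<bar>l a\<bar> \<le> C * ou_norm e a)}"

definition is_seminorm :: "('a::real_vector \<Rightarrow> real) \<Rightarrow> bool" where
  "is_seminorm L \<longleftrightarrow> (\<forall>a b. L (a + b) \<le> L a + L b) \<and> (\<forall>r a. L (r *\<^sub>R a) = \<bar>r\<bar> * L a)"

definition lip_norm :: "'a::ordered_real_vector \<Rightarrow> ('a \<Rightarrow> real) \<Rightarrow> bool" where
  "lip_norm e L \<longleftrightarrow>
     is_seminorm L \<and>
     (\<forall>a. L a = 0 \<longleftrightarrow> (\<exists>t. a = t *\<^sub>R e)) \<and>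
     (\<forall>x a. (\<forall>n. L (x n) \<le> 1) \<and> ((\<lambda>n. ou_norm e (x n - a)) \<longlonglongrightarrow> 0) \<longrightarrow> L a \<le> 1) \<and>
     (\<forall>\<epsilon>>0. \<exists>F. finite F \<and> F \<subseteq> {a. L a \<le> 1} \<and>
        (\<forall>a. L a \<le> 1 \<longrightarrow> (\<exists>b\<in>F. q_norm e (a - b) < \<epsilon>)))"

definition closed_lip_norm :: "'a::ordered_real_vector \<Rightarrow> ('a \<Rightarrow> real) \<Rightarrow> bool" where
  "closed_lip_norm e L \<longleftrightarrow> lip_norm e L \<and>
     (\<forall>x. (\<forall>n. L (x n) \<le> 1) \<and>
          (\<forall>\<epsilon>>0. \<exists>N. \<forall>m\<ge>N. \<forall>n\<ge>N. ou_norm e (x m - x n) < \<epsilon>)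
        \<longrightarrow> (\<exists>a. L a \<le> 1 \<and> (\<lambda>n. ou_norm e (x n - a)) \<longlonglongrightarrow> 0))"

definition coset :: "'a::ordered_real_vector \<Rightarrow> 'a \<Rightarrow> 'a set" where
  "coset e a = {a + t *\<^sub>R e | t. True}"

definition lipK :: "'a::ordered_real_vector \<Rightarrow> ('a \<Rightarrow> real) \<Rightarrow> 'a set set" where
  "lipK e L = coset e ` {a. L a \<le> 1}"

(* Af_0(K): continuous (for the quotient norm) affine real functions on K vanishing at 0.
   Operations on A / R e are computed on representatives. *)
definition Af0 :: "'a::ordered_real_vector \<Rightarrow> ('a \<Rightarrow> real) \<Rightarrow> ('a set \<Rightarrow> real) set" where
  "Af0 e L = {f.
     (\<forall>a b s. L a \<le> 1 \<and> L b \<le> 1 \<and> 0 \<le> s \<and> s \<le> 1 \<longrightarrow>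
        f (coset e (s *\<^sub>R a + (1 - s) *\<^sub>R b)) = s * f (coset e a) + (1 - s) * f (coset e b)) \<and>
     (\<forall>a. L a \<le> 1 \<longrightarrow> (\<forall>\<epsilon>>0. \<exists>\<delta>>0. \<forall>b. L b \<le> 1 \<and> q_norm e (b - a) < \<delta>
        \<longrightarrow> \<bar>f (coset e b) - f (coset e a)\<bar> < \<epsilon>)) \<and>
     f (coset e 0) = 0}"

definition dual_fun :: "('a \<Rightarrow> real) \<Rightarrow> 'a set \<Rightarrow> real" where
  "dual_fun l X = l (SOME a. a \<in> X)"

end

theory Submission
  imports Defs
begin


lemma inf_subadd:
  fixes f g h :: "'i \<Rightarrow> real"
  assumes "I \<noteq> {}" "J \<noteq> {}" "bdd_below (h ` K)"
    "\<And>i j. i \<in> I \<Longrightarrow> j \<in> J \<Longrightarrow> \<exists>k\<in>K. h k \<le> f i + g j"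
  shows "(INF k\<in>K. h k) \<le> (INF i\<in>I. f i) + (INF j\<in>J. g j)"
proof -
  have 1: "(INF k\<in>K. h k) \<le> f i + g j" if "i \<in> I" "j \<in> J" for i j
    using assms(4)[OF that] cINF_lower[OF assms(3)] by (meson order_trans)
  have 2: "(INF k\<in>K. h k) - g j \<le> (INF i\<in>I. f i)" if "j \<in> J" for j
    using cINF_greatest[OF assms(1)] 1 that by (smt (verit))
  have "(INF k\<in>K. h k) - (INF i\<in>I. f i) \<le> (INF j\<in>J. g j)"
    using cINF_greatest[OF assms(2)] 2 by (smt (verit))
  then show ?thesis by simp
qed

lemma inf_scale:
  fixes f h :: "'i \<Rightarrow> real" and c :: real
  assumes "c > 0" "I \<noteq> {}" "bdd_below (f ` I)" "bdd_below (h ` K)"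
    "\<And>i. i \<in> I \<Longrightarrow> \<exists>k\<in>K. h k \<le> c * f i"
    "\<And>k. k \<in> K \<Longrightarrow> \<exists>i\<in>I. c * f i \<le> h k"
  shows "(INF k\<in>K. h k) = c * (INF i\<in>I. f i)"
proof -
  have Kne: "K \<noteq> {}" using assms(2,5) by blast
  have "(INF k\<in>K. h k) / c \<le> f i" if iI: "i \<in> I" for i
  proof -
    obtain k where "k \<in> K" "h k \<le> c * f i" using assms(5)[OF iI] by blast
    then have "(INF k\<in>K. h k) \<le> c * f i" using cINF_lower[OF assms(4)] by (meson order_trans)
    then show ?thesis using assms(1) by (simp add: divide_simps mult.commute)
  qed
  then have "(INF k\<in>K. h k) / c \<le> (INF i\<in>I. f i)" using cINF_greatest[OF assms(2)] by blast
  then have a: "(INF k\<in>K. h k) \<le> c * (INF i\<in>I. f i)" using assms(1) by (simp add: divide_simps mult.commute)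
  have "c * (INF i\<in>I. f i) \<le> h k" if kK: "k \<in> K" for k
  proof -
    obtain i where "i \<in> I" "c * f i \<le> h k" using assms(6)[OF kK] by blast
    moreover have "(INF i\<in>I. f i) \<le> f i" using cINF_lower[OF assms(3)] \<open>i \<in> I\<close> .
    ultimately show ?thesis using assms(1) by (smt (verit) mult_left_mono)
  qed
  then have "c * (INF i\<in>I. f i) \<le> (INF k\<in>K. h k)" using cINF_greatest[OF Kne] by blast
  with a show ?thesis by simp
qed

definition sublin :: "('a::real_vector \<Rightarrow> real) \<Rightarrow> bool" where
  "sublin q \<longleftrightarrow> (\<forall>x y. q (x + y) \<le> q x + q y) \<and> (\<forall>c x. c > 0 \<longrightarrow> q (c *\<^sub>R x) = c * q x)"

lemma sublin_0: "sublin q \<Longrightarrow> q 0 = 0"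
proof -
  assume "sublin q"
  then have h: "\<And>c x. c > 0 \<Longrightarrow> q (c *\<^sub>R x) = c * q x" unfolding sublin_def by blast
  have "q ((2::real) *\<^sub>R 0) = 2 * q 0" by (rule h) simp
  then show ?thesis by simp
qed

lemma sublin_scale: "sublin q \<Longrightarrow> t \<ge> 0 \<Longrightarrow> q (t *\<^sub>R x) = t * q x"
  using sublin_0[of q] unfolding sublin_def
  by (cases "t = 0") auto

lemma sublin_lower: "sublin q \<Longrightarrow> - q (- x) \<le> q x"
proof -
  assume a: "sublin q"
  then have "q (x + - x) \<le> q x + q (- x)" unfolding sublin_def by blast
  then show ?thesis using sublin_0[OF a] by simp
qed

lemma minimal_sublin_linear:
  fixes q :: "'a::real_vector \<Rightarrow> real"
  assumes sq: "sublin q"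
    and mini: "\<And>r. sublin r \<Longrightarrow> (\<forall>x. r x \<le> q x) \<Longrightarrow> r = q"
  shows "linear q"
proof -
  have q0: "q 0 = 0" using sublin_0[OF sq] .
  have sub: "q (x + y) \<le> q x + q y" for x y using sq unfolding sublin_def by blast
  have key: "q x + q a \<le> q (x + a)" for x a
  proof -
    define r where "r x = (INF t\<in>{t::real. t \<ge> 0}. q (x + t *\<^sub>R a) - t * q a)" for x
    have lb: "- q (- x) \<le> q (x + t *\<^sub>R a) - t * q a" if "t \<ge> 0" for x t
    proof -
      have "q (t *\<^sub>R a) \<le> q (x + t *\<^sub>R a) + q (- x)" using sub[of "x + t *\<^sub>R a" "- x"] by simp
      then show ?thesis using sublin_scale[OF sq that] by simp
    qed
    have bdd: "bdd_below ((\<lambda>t. q (x + t *\<^sub>R a) - t * q a) ` {t. t \<ge> 0})" for x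
      using lb by (auto intro!: bdd_belowI2[where m="- q (- x)"])
    have ne: "{t::real. t \<ge> 0} \<noteq> {}" by auto
    have rle: "r x \<le> q x" for x
      using cINF_lower[OF bdd, of 0 x] unfolding r_def by simp
    have sr: "sublin r"
      unfolding sublin_def
    proof safe
      fix x y
      show "r (x + y) \<le> r x + r y" unfolding r_def
      proof (rule inf_subadd[OF ne ne bdd])
        fix i j :: real assume "i \<in> {t. t \<ge> 0}" "j \<in> {t. t \<ge> 0}"
        then show "\<exists>k\<in>{t. t \<ge> 0}. q (x + y + k *\<^sub>R a) - k * q a \<le>
             (q (x + i *\<^sub>R a) - i * q a) + (q (y + j *\<^sub>R a) - j * q a)"
          using sub[of "x + i *\<^sub>R a" "y + j *\<^sub>R a"]
          by (intro bexI[of _ "i + j"]) (auto simp: algebra_simps)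
      qed
    next
      fix c :: real and x assume c: "c > 0"
      show "r (c *\<^sub>R x) = c * r x" unfolding r_def
      proof (rule inf_scale[OF c ne bdd bdd])
        fix i :: real assume "i \<in> {t. t \<ge> 0}"
        then show "\<exists>k\<in>{t. t \<ge> 0}. q (c *\<^sub>R x + k *\<^sub>R a) - k * q a \<le> c * (q (x + i *\<^sub>R a) - i * q a)"
          using c sublin_scale[OF sq, of c "x + i *\<^sub>R a"]
          by (intro bexI[of _ "c * i"]) (auto simp: algebra_simps)
      next
        fix k :: real assume "k \<in> {t. t \<ge> 0}"
        then show "\<exists>i\<in>{t. t \<ge> 0}. c * (q (x + i *\<^sub>R a) - i * q a) \<le> q (c *\<^sub>R x + k *\<^sub>R a) - k * q a"
          using c sublin_scale[OF sq, of c "x + (k / c) *\<^sub>R a"]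
          by (intro bexI[of _ "k / c"]) (auto simp: algebra_simps)
      qed
    qed
    have "\<forall>x. r x \<le> q x" using rle by blast
    then have rq: "r = q" by (rule mini[OF sr])
    have "r x \<le> q (x + 1 *\<^sub>R a) - 1 * q a"
      unfolding r_def by (rule cINF_lower[OF bdd]) simp
    then show ?thesis unfolding rq by simp
  qed
  have add: "q (x + y) = q x + q y" for x y using key sub by (meson antisym)
  have neg: "q (- x) = - q x" for x using add[of x "- x"] q0 by simp
  show ?thesis
  proof (rule linearI)
    fix x y show "q (x + y) = q x + q y" by (rule add)
  next
    fix c :: real and x
    show "q (c *\<^sub>R x) = c *\<^sub>R q x"
    proof (cases "c \<ge> 0")
      case True then show ?thesis using sublin_scale[OF sq True] by simp
    next
      case False
      then have "q ((- c) *\<^sub>R x) = (- c) * q x" using sublin_scale[OF sq, of "- c"] by simp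
      then show ?thesis using neg[of "(- c) *\<^sub>R x"] by simp
    qed
  qed
qed

lemma hahn_banach_sublin:
  fixes p :: "'a::real_vector \<Rightarrow> real"
  assumes sp: "sublin p"
  shows "\<exists>l. linear l \<and> (\<forall>x. l x \<le> p x)"
proof -
  define A where "A = {q. sublin q \<and> (\<forall>x. q x \<le> p x)}"
  define P where "P = (\<lambda>(a::'a \<Rightarrow> real) u. \<forall>x. u x \<le> a x)"
  have po: "partial_order_on A (relation_of P A)"
    unfolding partial_order_on_def preorder_on_def refl_on_def trans_def antisym_def relation_of_def P_def
    by (auto intro: order_trans antisym ext simp: fun_eq_iff)
  have ch: "\<exists>u \<in> A. \<forall>a \<in> C. P a u" if C: "C \<in> Chains (relation_of P A)" for C
  proof (cases "C = {}")
    case True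
    then show ?thesis using sp unfolding A_def by auto
  next
    case False
    have CA: "C \<subseteq> A" using C unfolding Chains_def relation_of_def by auto
    have tot: "(\<forall>x. q1 x \<le> q2 x) \<or> (\<forall>x. q2 x \<le> q1 x)" if "q1 \<in> C" "q2 \<in> C" for q1 q2
      using C that unfolding Chains_def relation_of_def P_def by blast
    define r where "r x = (INF q\<in>C. q x)" for x
    have bdd: "bdd_below ((\<lambda>q. q x) ` C)" for x
    proof (rule bdd_belowI2[where m="- p (- x)"])
      fix q assume "q \<in> C"
      then have "sublin q" "q (- x) \<le> p (- x)" using CA unfolding A_def by auto
      then show "- p (- x) \<le> q x" using sublin_lower[of q x] by simp
    qed
    have "sublin r" unfolding sublin_def
    proof safe
      fix x y
      show "r (x + y) \<le> r x + r y" unfolding r_def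
      proof (rule inf_subadd[OF False False bdd])
        fix i j assume ij: "i \<in> C" "j \<in> C"
        then have si: "sublin i" "sublin j" using CA unfolding A_def by auto
        from tot[OF ij] show "\<exists>k\<in>C. k (x + y) \<le> i x + j y"
        proof
          assume h: "\<forall>x. i x \<le> j x"
          show ?thesis using ij si h unfolding sublin_def by (meson add_left_mono order_trans)
        next
          assume h: "\<forall>x. j x \<le> i x"
          show ?thesis using ij si h unfolding sublin_def by (meson add_right_mono order_trans)
        qed
      qed
    next
      fix c :: real and x assume c: "c > 0"
      show "r (c *\<^sub>R x) = c * r x" unfolding r_def
      proof (rule inf_scale[OF c False bdd bdd])
        fix q assume "q \<in> C"
        moreover then have "q (c *\<^sub>R x) = c * q x" using c CA by (auto simp: A_def sublin_def)
        ultimately show "\<exists>k\<in>C. k (c *\<^sub>R x) \<le> c * q x" by (intro bexI[of _ q]) simp_all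
      next
        fix q assume "q \<in> C"
        moreover then have "q (c *\<^sub>R x) = c * q x" using c CA by (auto simp: A_def sublin_def)
        ultimately show "\<exists>i\<in>C. c * i x \<le> q (c *\<^sub>R x)" by (intro bexI[of _ q]) simp_all
      qed
    qed
    moreover have "r x \<le> p x" for x
    proof -
      obtain q where "q \<in> C" using False by blast
      then have "r x \<le> q x" using cINF_lower[OF bdd] unfolding r_def by blast
      moreover have "q x \<le> p x" using CA \<open>q \<in> C\<close> unfolding A_def by blast
      ultimately show ?thesis by linarith
    qed
    ultimately have "r \<in> A" unfolding A_def by blast
    moreover have "\<forall>a\<in>C. P a r" unfolding P_def r_def using cINF_lower[OF bdd] by blast
    ultimately show ?thesis by blast
  qed
  obtain m where m: "m \<in> A" "\<And>a. a \<in> A \<Longrightarrow> P m a \<Longrightarrow> a = m"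
    using predicate_Zorn[OF po ch] by blast
  have "linear m"
  proof (rule minimal_sublin_linear)
    show "sublin m" using m unfolding A_def by blast
  next
    fix r assume r: "sublin r" "\<forall>x. r x \<le> m x"
    have "\<forall>x. m x \<le> p x" using m(1) unfolding A_def by blast
    then have "r \<in> A" using r unfolding A_def by (auto intro: order_trans)
    then show "r = m" using m(2) r(2) unfolding P_def by blast
  qed
  then show ?thesis using m unfolding A_def by blast
qed



lemma lin_facts:
  fixes l :: "'a::real_vector \<Rightarrow> real"
  assumes "linear l"
  shows "l (x + y) = l x + l y" "l (c *\<^sub>R x) = c * l x" "l (x - y) = l x - l y"
    "l (- x) = - l x" "l 0 = 0"
proof -
  have a: "l (x + y) = l x + l y" "l (c *\<^sub>R x) = c * l x" for x y c
    using assms unfolding linear_iff by auto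
  show "l (x + y) = l x + l y" "l (c *\<^sub>R x) = c * l x" using a by auto
  show "l (- x) = - l x" using a(2)[of "-1" x] by simp
  show "l 0 = 0" using a(2)[of 0 x] by simp
  show "l (x - y) = l x - l y" using a(1)[of x "- y"] a(2)[of "-1" y] by simp
qed

definition Sset :: "'a::ordered_real_vector \<Rightarrow> 'a \<Rightarrow> real set" where
  "Sset e a = {r. 0 \<le> r \<and> - (r *\<^sub>R e) \<le> a \<and> a \<le> r *\<^sub>R e}"

lemma ou_norm_S: "ou_norm e a = Inf (Sset e a)"
  unfolding ou_norm_def Sset_def by simp

lemma q_norm_range: "q_norm e a = (INF t. ou_norm e (a + t *\<^sub>R e))"
proof -
  have "{ou_norm e (a + t *\<^sub>R e) | t. True} = range (\<lambda>t. ou_norm e (a + t *\<^sub>R e))" by auto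
  then show ?thesis unfolding q_norm_def by simp
qed

locale sane =
  fixes e :: "'a::ordered_real_vector"
  assumes ou: "order_unit e" and epos: "0 \<le> e"
begin

lemma S_ne: "Sset e a \<noteq> {}"
proof -
  obtain r1 where r1: "a \<le> r1 *\<^sub>R e" using ou unfolding order_unit_def by blast
  obtain r2 where r2: "- a \<le> r2 *\<^sub>R e" using ou unfolding order_unit_def by blast
  define r where "r = max (max r1 r2) 0"
  have "r1 *\<^sub>R e \<le> r *\<^sub>R e" "r2 *\<^sub>R e \<le> r *\<^sub>R e"
    using epos by (auto simp: r_def intro!: scaleR_right_mono)
  then have "a \<le> r *\<^sub>R e" "- a \<le> r *\<^sub>R e" using r1 r2 by (auto intro: order_trans)
  then have "r \<in> Sset e a" unfolding Sset_def r_def by (auto simp: minus_le_iff)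
  then show ?thesis by blast
qed

lemma S_bdd: "bdd_below (Sset e a)"
  unfolding Sset_def by (auto intro: bdd_belowI[where m=0])

lemma N_nonneg: "0 \<le> ou_norm e a"
  unfolding ou_norm_S using S_ne by (intro cInf_greatest) (auto simp: Sset_def)

lemma N_le: assumes "r \<in> Sset e a" shows "ou_norm e a \<le> r"
  unfolding ou_norm_S by (rule cInf_lower[OF assms S_bdd])

lemma N_0: "ou_norm e 0 = 0"
  using N_le[of 0 0] N_nonneg[of 0] by (auto simp: Sset_def)

lemma N_add: "ou_norm e (a + b) \<le> ou_norm e a + ou_norm e b"
proof -
  have "(INF r\<in>Sset e (a + b). r) \<le> (INF r\<in>Sset e a. r) + (INF r\<in>Sset e b. r)"
  proof (rule inf_subadd[OF S_ne S_ne])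
    show "bdd_below ((\<lambda>r. r) ` Sset e (a + b))" using S_bdd by simp
  next
    fix i j assume "i \<in> Sset e a" "j \<in> Sset e b"
    then have h: "- (i *\<^sub>R e) \<le> a" "a \<le> i *\<^sub>R e" "0 \<le> i" "- (j *\<^sub>R e) \<le> b" "b \<le> j *\<^sub>R e" "0 \<le> j"
      unfolding Sset_def by auto
    have "- (i *\<^sub>R e) + - (j *\<^sub>R e) \<le> a + b" by (rule add_mono[OF h(1) h(4)])
    moreover have "a + b \<le> i *\<^sub>R e + j *\<^sub>R e" by (rule add_mono[OF h(2) h(5)])
    moreover have "0 \<le> i + j" using h by simp
    ultimately have "i + j \<in> Sset e (a + b)"
      unfolding Sset_def mem_Collect_eq scaleR_add_left minus_add_distrib by blast
    then show "\<exists>k\<in>Sset e (a + b). k \<le> i + j" by blast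
  qed
  then show ?thesis unfolding ou_norm_S by simp
qed

lemma N_neg: "ou_norm e (- a) = ou_norm e a"
proof -
  have "Sset e (- a) = Sset e a" unfolding Sset_def by (auto simp: minus_le_iff)
  then show ?thesis unfolding ou_norm_S by simp
qed

lemma N_scale: assumes c: "c > 0" shows "ou_norm e (c *\<^sub>R a) = c * ou_norm e a"
proof -
  have "(INF r\<in>Sset e (c *\<^sub>R a). r) = c * (INF r\<in>Sset e a. r)"
  proof (rule inf_scale[OF c S_ne])
    show "bdd_below ((\<lambda>r. r) ` Sset e a)" "bdd_below ((\<lambda>r. r) ` Sset e (c *\<^sub>R a))" using S_bdd by simp_all
  next
    fix i assume i: "i \<in> Sset e a"
    have "c * i \<in> Sset e (c *\<^sub>R a)"
    proof -
      have "- (i *\<^sub>R e) \<le> a" "a \<le> i *\<^sub>R e" "0 \<le> i" using i unfolding Sset_def by auto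
      then have "c *\<^sub>R (- (i *\<^sub>R e)) \<le> c *\<^sub>R a" "c *\<^sub>R a \<le> c *\<^sub>R (i *\<^sub>R e)"
        using c by (metis less_le scaleR_left_mono)+
      then have "- ((c * i) *\<^sub>R e) \<le> c *\<^sub>R a" "c *\<^sub>R a \<le> (c * i) *\<^sub>R e"
        by (metis scaleR_scaleR scaleR_minus_right)+
      then show ?thesis using c \<open>0 \<le> i\<close> unfolding Sset_def by simp
    qed
    then show "\<exists>k\<in>Sset e (c *\<^sub>R a). k \<le> c * i" by blast
  next
    fix k assume k: "k \<in> Sset e (c *\<^sub>R a)"
    have "k / c \<in> Sset e a"
    proof -
      have "- (k *\<^sub>R e) \<le> c *\<^sub>R a" "c *\<^sub>R a \<le> k *\<^sub>R e" "0 \<le> k" using k unfolding Sset_def by auto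
      then have "(1/c) *\<^sub>R (- (k *\<^sub>R e)) \<le> (1/c) *\<^sub>R (c *\<^sub>R a)" "(1/c) *\<^sub>R (c *\<^sub>R a) \<le> (1/c) *\<^sub>R (k *\<^sub>R e)"
        using c by (metis less_le scaleR_left_mono zero_le_divide_1_iff)+
      then show ?thesis using c \<open>0 \<le> k\<close> unfolding Sset_def by simp
    qed
    moreover have "c * (k / c) \<le> k" using c by simp
    ultimately show "\<exists>i\<in>Sset e a. c * i \<le> k" by blast
  qed
  then show ?thesis unfolding ou_norm_S by simp
qed

lemma Q_bdd: "bdd_below (range (\<lambda>t. ou_norm e (a + t *\<^sub>R e)))"
  using N_nonneg by (auto intro: bdd_belowI2[where m=0])

lemma Q_nonneg: "0 \<le> q_norm e a"
  unfolding q_norm_range using N_nonneg by (intro cINF_greatest) auto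

lemma Q_lower: "q_norm e a \<le> ou_norm e (a + t *\<^sub>R e)"
  unfolding q_norm_range by (rule cINF_lower[OF Q_bdd]) simp

lemma Q_le_N: "q_norm e a \<le> ou_norm e a"
  using Q_lower[of a 0] by simp

lemma Q_0: "q_norm e 0 = 0"
  using Q_le_N[of 0] Q_nonneg[of 0] N_0 by simp

lemma Q_e: "q_norm e e = 0"
  using Q_lower[of e "-1"] Q_nonneg[of e] N_0 by simp

lemma Q_add: "q_norm e (a + b) \<le> q_norm e a + q_norm e b"
  unfolding q_norm_range
proof (rule inf_subadd)
  fix i j :: real
  have "ou_norm e (a + b + (i + j) *\<^sub>R e) \<le> ou_norm e (a + i *\<^sub>R e) + ou_norm e (b + j *\<^sub>R e)"
    using N_add[of "a + i *\<^sub>R e" "b + j *\<^sub>R e"] by (simp add: algebra_simps)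
  then show "\<exists>k\<in>UNIV. ou_norm e (a + b + k *\<^sub>R e) \<le> ou_norm e (a + i *\<^sub>R e) + ou_norm e (b + j *\<^sub>R e)"
    by blast
qed (use Q_bdd in auto)

lemma Q_neg_le: "q_norm e (- a) \<le> q_norm e a"
  unfolding q_norm_range[of e a]
proof (rule cINF_greatest)
  fix t :: real
  show "q_norm e (- a) \<le> ou_norm e (a + t *\<^sub>R e)"
    using Q_lower[of "- a" "- t"] N_neg[of "a + t *\<^sub>R e"] by simp
qed simp

lemma Q_neg: "q_norm e (- a) = q_norm e a"
  using Q_neg_le[of a] Q_neg_le[of "- a"] by simp

lemma Q_sym: "q_norm e (a - b) = q_norm e (b - a)"
  using Q_neg[of "a - b"] by simp

lemma Q_scale: assumes c: "c > 0" shows "q_norm e (c *\<^sub>R a) = c * q_norm e a"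
  unfolding q_norm_range
proof (rule inf_scale[OF c])
  fix i :: real
  show "\<exists>k\<in>UNIV. ou_norm e (c *\<^sub>R a + k *\<^sub>R e) \<le> c * ou_norm e (a + i *\<^sub>R e)"
  proof -
    have eq: "c *\<^sub>R (a + i *\<^sub>R e) = c *\<^sub>R a + (c * i) *\<^sub>R e" by (simp add: scaleR_add_right)
    have "ou_norm e (c *\<^sub>R a + (c * i) *\<^sub>R e) = c * ou_norm e (a + i *\<^sub>R e)"
      using N_scale[OF c, of "a + i *\<^sub>R e"] unfolding eq .
    then have "ou_norm e (c *\<^sub>R a + (c * i) *\<^sub>R e) \<le> c * ou_norm e (a + i *\<^sub>R e)" by linarith
    then show ?thesis by blast
  qed
next
  fix k :: real
  show "\<exists>i\<in>UNIV. c * ou_norm e (a + i *\<^sub>R e) \<le> ou_norm e (c *\<^sub>R a + k *\<^sub>R e)"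
  proof -
    have eq: "c *\<^sub>R (a + (k / c) *\<^sub>R e) = c *\<^sub>R a + k *\<^sub>R e" using c by (simp add: scaleR_add_right)
    have "ou_norm e (c *\<^sub>R a + k *\<^sub>R e) = c * ou_norm e (a + (k / c) *\<^sub>R e)"
      using N_scale[OF c, of "a + (k / c) *\<^sub>R e"] unfolding eq .
    then have "c * ou_norm e (a + (k / c) *\<^sub>R e) \<le> ou_norm e (c *\<^sub>R a + k *\<^sub>R e)" by linarith
    then show ?thesis by blast
  qed
next
  show "UNIV \<noteq> {}" by simp
next
  show "bdd_below (range (\<lambda>i. ou_norm e (a + i *\<^sub>R e)))" by (rule Q_bdd)
next
  show "bdd_below (range (\<lambda>k. ou_norm e (c *\<^sub>R a + k *\<^sub>R e)))" by (rule Q_bdd)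
qed

lemma Q_scale0: assumes c: "c \<ge> 0" shows "q_norm e (c *\<^sub>R a) = c * q_norm e a"
proof (cases "c = 0")
  case True then show ?thesis using Q_0 by simp
next
  case False then have "c > 0" using c by simp
  then show ?thesis by (rule Q_scale)
qed

end



lemma sem_facts:
  assumes "is_seminorm L"
  shows "L 0 = 0" "L (- a) = L a" "0 \<le> L a" "L (c *\<^sub>R a) = \<bar>c\<bar> * L a"
    "L (a + b) \<le> L a + L b"
proof -
  have sc: "L (c *\<^sub>R a) = \<bar>c\<bar> * L a" for c a using assms unfolding is_seminorm_def by blast
  have ad: "L (a + b) \<le> L a + L b" for a b using assms unfolding is_seminorm_def by blast
  show "L (c *\<^sub>R a) = \<bar>c\<bar> * L a" "L (a + b) \<le> L a + L b" using sc ad by blast+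
  show "L 0 = 0" using sc[of 0 a] by simp
  show n: "L (- a) = L a" using sc[of "-1" a] by simp
  have "L (a + - a) \<le> L a + L (- a)" by (rule ad)
  then show "0 \<le> L a" using sc[of 0 a] n by simp
qed

lemma sem_conv:
  assumes "is_seminorm L" "L a \<le> 1" "L b \<le> 1" "0 \<le> s" "s \<le> 1"
  shows "L (s *\<^sub>R a + (1 - s) *\<^sub>R b) \<le> 1"
proof -
  have "L (s *\<^sub>R a + (1 - s) *\<^sub>R b) \<le> L (s *\<^sub>R a) + L ((1 - s) *\<^sub>R b)"
    using sem_facts(5)[OF assms(1)] by blast
  also have "\<dots> = s * L a + (1 - s) * L b" using sem_facts(4)[OF assms(1)] assms(4,5) by simp
  also have "\<dots> \<le> s * 1 + (1 - s) * 1"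
    using assms by (intro add_mono mult_left_mono) auto
  finally show ?thesis by simp
qed

lemma dual_fun_coset:
  assumes "linear l" "l e = 0"
  shows "dual_fun l (coset e a) = l a"
proof -
  have "a = a + 0 *\<^sub>R e" by simp
  then have "a \<in> coset e a" unfolding coset_def by blast
  then have "(SOME b. b \<in> coset e a) \<in> coset e a" by (rule someI)
  then obtain t where "(SOME b. b \<in> coset e a) = a + t *\<^sub>R e" unfolding coset_def by blast
  then show ?thesis unfolding dual_fun_def using lin_facts[OF assms(1)] assms(2) by simp
qed

lemma coset_mult_e: "coset e (t *\<^sub>R e) = coset e 0"
proof -
  have 1: "t *\<^sub>R e + s *\<^sub>R e = 0 + (t + s) *\<^sub>R e" for s by (simp add: scaleR_add_left)
  have 2: "0 + s *\<^sub>R e = t *\<^sub>R e + (s - t) *\<^sub>R e" for s by (simp add: scaleR_diff_left)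
  show ?thesis unfolding coset_def using 1 2 by blast
qed

lemma triv_case:
  fixes e :: "'a::ordered_real_vector" and L :: "'a \<Rightarrow> real"
  assumes triv: "\<forall>a. \<exists>t. a = t *\<^sub>R e"
  shows "(\<forall>l\<in>dual_space e. l e = 0 \<longrightarrow> dual_fun l \<in> Af0 e L) \<and>
         (\<forall>f\<in>Af0 e L. \<forall>\<epsilon>>0. \<exists>l\<in>dual_space e. l e = 0 \<and>
            (\<forall>X\<in>lipK e L. \<bar>f X - dual_fun l X\<bar> < \<epsilon>))"
proof safe
  fix l assume l: "l \<in> dual_space e" "l e = 0"
  then have lin: "linear l" unfolding dual_space_def by blast
  have z: "l a = 0" for a
  proof -
    obtain t where "a = t *\<^sub>R e" using triv by blast
    then show ?thesis using lin_facts(2)[OF lin, of t e] l(2) by simp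
  qed
  have "dual_fun l = (\<lambda>X. 0)" unfolding dual_fun_def using z by (simp add: fun_eq_iff)
  then show "dual_fun l \<in> Af0 e L" unfolding Af0_def by simp
next
  fix f :: "'a set \<Rightarrow> real" and \<epsilon> :: real
  assume f: "f \<in> Af0 e L" and eps: "\<epsilon> > 0"
  have f0: "f (coset e 0) = 0" using f unfolding Af0_def by blast
  have lin0: "linear (\<lambda>x::'a. 0::real)" by (rule linearI) simp_all
  have "\<forall>a. \<bar>(\<lambda>x::'a. 0::real) a\<bar> \<le> 0 * ou_norm e a" by simp
  then have d0: "(\<lambda>x::'a. 0::real) \<in> dual_space e" unfolding dual_space_def using lin0 by blast
  have df: "dual_fun (\<lambda>x::'a. 0::real) X = 0" for X unfolding dual_fun_def by simp
  have "\<bar>f X - dual_fun (\<lambda>x. 0) X\<bar> < \<epsilon>" if XK: "X \<in> lipK e L" for X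
  proof -
    obtain k where "X = coset e k" using XK unfolding lipK_def by blast
    moreover obtain t where "k = t *\<^sub>R e" using triv by blast
    ultimately have "X = coset e 0" using coset_mult_e by simp
    then show ?thesis using f0 df eps by simp
  qed
  then show "\<exists>l\<in>dual_space e. l e = 0 \<and> (\<forall>X\<in>lipK e L. \<bar>f X - dual_fun l X\<bar> < \<epsilon>)"
    using d0 by (intro bexI[of _ "\<lambda>x. 0"]) auto
qed

lemma degen:
  fixes e :: "'a::ordered_real_vector" and L :: "'a \<Rightarrow> real"
  assumes cl: "closed_lip_norm e L" and ne: "\<not> 0 \<le> e"
  shows "\<forall>a. \<exists>t. a = t *\<^sub>R e"
proof (rule ccontr)
  assume "\<not> ?thesis"
  then obtain a0 where a0: "\<forall>t. a0 \<noteq> t *\<^sub>R e" by blast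
  have lip: "lip_norm e L" using cl unfolding closed_lip_norm_def by blast
  have sem: "is_seminorm L" using lip unfolding lip_norm_def by blast
  have ker: "L a = 0 \<longleftrightarrow> (\<exists>t. a = t *\<^sub>R e)" for a using lip unfolding lip_norm_def by blast
  have clos: "\<And>x a. (\<forall>n. L (x n) \<le> 1) \<Longrightarrow> ((\<lambda>n. ou_norm e (x n - a)) \<longlonglongrightarrow> 0) \<Longrightarrow> L a \<le> 1"
    using lip unfolding lip_norm_def by blast
  have tb: "\<And>\<epsilon>. \<epsilon> > 0 \<Longrightarrow> \<exists>F. finite F \<and> F \<subseteq> {a. L a \<le> 1} \<and>
        (\<forall>a. L a \<le> 1 \<longrightarrow> (\<exists>b\<in>F. q_norm e (a - b) < \<epsilon>))"
    using lip unfolding lip_norm_def by blast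
  have compl: "\<And>x. (\<forall>n. L (x n) \<le> 1) \<Longrightarrow>
          (\<forall>\<epsilon>>0. \<exists>N. \<forall>m\<ge>N. \<forall>n\<ge>N. ou_norm e (x m - x n) < \<epsilon>)
        \<Longrightarrow> (\<exists>a. L a \<le> 1 \<and> (\<lambda>n. ou_norm e (x n - a)) \<longlonglongrightarrow> 0)"
    using cl unfolding closed_lip_norm_def by blast
  define c0 where "c0 = Inf ({}::real set)"
  have S_sub: "r = 0 \<and> y = 0" if r: "r \<in> Sset e y" for r y
  proof -
    have h: "0 \<le> r" "- (r *\<^sub>R e) \<le> y" "y \<le> r *\<^sub>R e" using r unfolding Sset_def by auto
    have "r = 0"
    proof (rule ccontr)
      assume "r \<noteq> 0" then have rp: "r > 0" using h by simp
      have "- (r *\<^sub>R e) \<le> r *\<^sub>R e" using h order_trans by blast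
      then have "- (r *\<^sub>R e) + r *\<^sub>R e \<le> r *\<^sub>R e + r *\<^sub>R e" by (rule add_right_mono)
      then have "0 \<le> (2 * r) *\<^sub>R e" by (simp add: scaleR_add_left[symmetric])
      then have "(1 / (2 * r)) *\<^sub>R 0 \<le> (1 / (2 * r)) *\<^sub>R ((2 * r) *\<^sub>R e)"
        using rp by (intro scaleR_left_mono) auto
      then have "0 \<le> e" using rp by simp
      then show False using ne by blast
    qed
    then show ?thesis using h by (simp add: antisym)
  qed
  have N_deg: "ou_norm e y = (if y = 0 then 0 else c0)" for y
  proof (cases "y = 0")
    case True
    have "0 \<in> Sset e y" using True by (simp add: Sset_def)
    moreover have "x \<in> Sset e y \<Longrightarrow> x = 0" for x using S_sub by blast
    ultimately have "Sset e y = {0}" by blast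
    then show ?thesis using True by (simp add: ou_norm_S)
  next
    case False
    have "Sset e y = {}" using S_sub False by blast
    then show ?thesis using False by (simp add: ou_norm_S c0_def)
  qed
  have Q_deg: "q_norm e x = c0" if x: "\<forall>t. x \<noteq> t *\<^sub>R e" for x
  proof -
    have "x + t *\<^sub>R e \<noteq> 0" for t
    proof
      assume "x + t *\<^sub>R e = 0"
      then have "x = (- t) *\<^sub>R e" by (simp add: eq_neg_iff_add_eq_0)
      then show False using x by blast
    qed
    then have "\<forall>t. ou_norm e (x + t *\<^sub>R e) = c0" using N_deg by simp
    then show ?thesis unfolding q_norm_range by simp
  qed
  have L0: "0 \<le> L a" for a using sem_facts(3)[OF sem] .
  have La0: "L a0 > 0" using L0[of a0] ker[of a0] a0 by force
  define v where "v = (1 / L a0) *\<^sub>R a0"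
  have Lv: "L v = 1" unfolding v_def using sem_facts(4)[OF sem] La0 by simp
  have vnot: "s *\<^sub>R v \<noteq> t *\<^sub>R e" if s: "s \<noteq> 0" for s t
  proof
    assume h: "s *\<^sub>R v = t *\<^sub>R e"
    have "a0 = (L a0 / s) *\<^sub>R (s *\<^sub>R v)" unfolding v_def using s La0 by simp
    also have "\<dots> = (L a0 / s * t) *\<^sub>R e" using h by simp
    finally show False using a0 by blast
  qed
  have v0: "v \<noteq> 0" using vnot[of 1 0] by simp
  consider "c0 = 0" | "c0 < 0" | "c0 > 0" by linarith
  then show False
  proof cases
    case 1
    have "L ((2::real) *\<^sub>R v) \<le> 1"
    proof (rule clos[of "\<lambda>n. 0"])
      show "\<forall>n. L 0 \<le> 1" using sem_facts(1)[OF sem] by simp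
      have "\<And>y. ou_norm e y = 0" using N_deg 1 by simp
      then show "(\<lambda>n. ou_norm e (0 - (2::real) *\<^sub>R v)) \<longlonglongrightarrow> 0" by simp
    qed
    then show False using Lv sem_facts(4)[OF sem, of 2 v] by simp
  next
    case 2
    define x where "x n = (if even n then 0 else v)" for n :: nat
    have Lx: "\<forall>n. L (x n) \<le> 1" unfolding x_def using Lv sem_facts(1)[OF sem] by simp
    have Nx: "ou_norm e y < \<epsilon>" if "\<epsilon> > 0" for y \<epsilon> using N_deg[of y] 2 that by simp
    have "\<forall>\<epsilon>>0. \<exists>N. \<forall>m\<ge>N. \<forall>n\<ge>N. ou_norm e (x m - x n) < \<epsilon>" using Nx by blast
    then obtain b where b: "(\<lambda>n. ou_norm e (x n - b)) \<longlonglongrightarrow> 0" using compl[OF Lx] by blast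
    obtain no where no: "\<forall>n\<ge>no. norm (ou_norm e (x n - b) - 0) < - c0"
      using b 2 unfolding LIMSEQ_iff by (metis neg_0_less_iff_less)
    have xb: "x n = b" if "n \<ge> no" for n
    proof (rule ccontr)
      assume "x n \<noteq> b"
      then have "ou_norm e (x n - b) = c0" using N_deg by simp
      then show False using no that 2 by force
    qed
    have "x (2 * no) = 0" unfolding x_def by simp
    moreover have "x (2 * no + 1) = v" unfolding x_def by simp
    ultimately show False using xb[of "2 * no"] xb[of "2 * no + 1"] v0 by simp
  next
    case 3
    obtain F where F: "finite F" "F \<subseteq> {a. L a \<le> 1}"
      "\<forall>a. L a \<le> 1 \<longrightarrow> (\<exists>b\<in>F. q_norm e (a - b) < c0)" using tb[OF 3] by blast
    have ex: "\<exists>b. b \<in> F \<and> (\<exists>t. s *\<^sub>R v - b = t *\<^sub>R e)" if s: "s \<in> {0..1::real}" for s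
    proof -
      have "L (s *\<^sub>R v) \<le> 1" using s sem_facts(4)[OF sem, of s v] Lv by simp
      then obtain b where b: "b \<in> F" "q_norm e (s *\<^sub>R v - b) < c0" using F(3) by blast
      have "\<exists>t. s *\<^sub>R v - b = t *\<^sub>R e"
      proof (rule ccontr)
        assume "\<not> ?thesis"
        then have "q_norm e (s *\<^sub>R v - b) = c0" using Q_deg by blast
        then show False using b by simp
      qed
      then show ?thesis using b by blast
    qed
    define h where "h s = (SOME b. b \<in> F \<and> (\<exists>t. s *\<^sub>R v - b = t *\<^sub>R e))" for s
    have hs: "h s \<in> F \<and> (\<exists>t. s *\<^sub>R v - h s = t *\<^sub>R e)" if "s \<in> {0..1::real}" for s
      unfolding h_def using someI_ex[OF ex[OF that]] .
    have "inj_on h {0..1}"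
    proof (rule inj_onI)
      fix s1 s2 assume s: "s1 \<in> {0..1::real}" "s2 \<in> {0..1::real}" "h s1 = h s2"
      obtain t1 where t1: "s1 *\<^sub>R v - h s1 = t1 *\<^sub>R e" using hs[OF s(1)] by blast
      obtain t2 where t2: "s2 *\<^sub>R v - h s2 = t2 *\<^sub>R e" using hs[OF s(2)] by blast
      have "(s1 - s2) *\<^sub>R v = (s1 *\<^sub>R v - h s1) - (s2 *\<^sub>R v - h s2)"
        using s(3) by (simp add: scaleR_diff_left)
      also have "\<dots> = (t1 - t2) *\<^sub>R e" using t1 t2 by (simp add: scaleR_diff_left)
      finally show "s1 = s2" using vnot[of "s1 - s2" "t1 - t2"] by auto
    qed
    moreover have "h ` {0..1} \<subseteq> F" using hs by blast
    then have "finite (h ` {0..1::real})" using F(1) finite_subset by blast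
    ultimately have "finite {0..1::real}" using finite_imageD by blast
    then show False using infinite_Icc[of "0::real" 1] by simp
  qed
qed



context sane
begin

lemma part1:
  assumes l: "l \<in> dual_space e" "l e = 0"
  shows "dual_fun l \<in> Af0 e L"
proof -
  have lin: "linear l" using l unfolding dual_space_def by blast
  obtain C where C: "\<And>a. \<bar>l a\<bar> \<le> C * ou_norm e a" using l unfolding dual_space_def by blast
  define D where "D = \<bar>C\<bar> + 1"
  have Dp: "D > 0" unfolding D_def by simp
  have bnd: "\<bar>l x\<bar> \<le> D * q_norm e x" for x
  proof -
    have "\<bar>l x\<bar> / D \<le> ou_norm e (x + t *\<^sub>R e)" for t
    proof -
      have "l (x + t *\<^sub>R e) = l x" using lin_facts[OF lin] l(2) by simp
      then have "\<bar>l x\<bar> \<le> C * ou_norm e (x + t *\<^sub>R e)" using C by metis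
      also have "\<dots> \<le> D * ou_norm e (x + t *\<^sub>R e)"
        unfolding D_def using N_nonneg[of "x + t *\<^sub>R e"] by (intro mult_right_mono) auto
      finally show ?thesis using Dp by (simp add: divide_simps mult.commute)
    qed
    then have "\<bar>l x\<bar> / D \<le> q_norm e x" unfolding q_norm_range by (intro cINF_greatest) auto
    then show ?thesis using Dp by (simp add: divide_simps mult.commute)
  qed
  have dfc: "dual_fun l (coset e a) = l a" for a using dual_fun_coset[OF lin l(2)] .
  show ?thesis unfolding Af0_def
  proof (intro CollectI conjI allI impI)
    fix a b and s :: real
    show "dual_fun l (coset e (s *\<^sub>R a + (1 - s) *\<^sub>R b)) =
          s * dual_fun l (coset e a) + (1 - s) * dual_fun l (coset e b)"
      unfolding dfc using lin_facts[OF lin] by simp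
  next
    fix a and \<epsilon> :: real assume eps: "\<epsilon> > 0"
    show "\<exists>\<delta>>0. \<forall>b. L b \<le> 1 \<and> q_norm e (b - a) < \<delta> \<longrightarrow>
          \<bar>dual_fun l (coset e b) - dual_fun l (coset e a)\<bar> < \<epsilon>"
    proof (intro exI[of _ "\<epsilon> / D"] conjI allI impI)
      show "\<epsilon> / D > 0" using eps Dp by simp
    next
      fix b assume b: "L b \<le> 1 \<and> q_norm e (b - a) < \<epsilon> / D"
      have "\<bar>l b - l a\<bar> = \<bar>l (b - a)\<bar>" using lin_facts[OF lin] by simp
      also have "\<dots> \<le> D * q_norm e (b - a)" by (rule bnd)
      also have "\<dots> < D * (\<epsilon> / D)" using b Dp by (intro mult_strict_left_mono) auto
      also have "\<dots> = \<epsilon>" using Dp by simp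
      finally show "\<bar>dual_fun l (coset e b) - dual_fun l (coset e a)\<bar> < \<epsilon>" unfolding dfc .
    qed
  next
    show "dual_fun l (coset e 0) = 0" unfolding dfc using lin_facts[OF lin] by simp
  qed
qed

end



lemma ar1: "(c * t) * G + M * (c * Q) = c * (t * G + M * (Q::real))"
  by (simp add: algebra_simps)

lemma ar2: "c \<noteq> 0 \<Longrightarrow> c * ((t / c) * G + M * Q) = t * G + M * (c * (Q::real))"
  by (simp add: algebra_simps)

context sane
begin

lemma part2:
  fixes L :: "'a \<Rightarrow> real" and f :: "'a set \<Rightarrow> real"
  assumes lip: "lip_norm e L" and f: "f \<in> Af0 e L" and eps: "\<epsilon> > 0"
  shows "\<exists>l\<in>dual_space e. l e = 0 \<and> (\<forall>X\<in>lipK e L. \<bar>f X - dual_fun l X\<bar> < \<epsilon>)"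
proof -
  have sem: "is_seminorm L" using lip unfolding lip_norm_def by blast
  have tb: "\<And>\<epsilon>. \<epsilon> > 0 \<Longrightarrow> \<exists>F. finite F \<and> F \<subseteq> {a. L a \<le> 1} \<and>
        (\<forall>a. L a \<le> 1 \<longrightarrow> (\<exists>b\<in>F. q_norm e (a - b) < \<epsilon>))"
    using lip unfolding lip_norm_def by blast
  define g where "g a = f (coset e a)" for a
  have aff: "g (s *\<^sub>R a + (1 - s) *\<^sub>R b) = s * g a + (1 - s) * g b"
    if "L a \<le> 1" "L b \<le> 1" "0 \<le> s" "s \<le> 1" for a b s
    using f that unfolding Af0_def g_def by blast
  have g0: "g 0 = 0" using f unfolding Af0_def g_def by blast
  have L0: "L 0 \<le> 1" using sem_facts(1)[OF sem] by simp
  have cont0: "\<exists>\<delta>>0. \<forall>b. L b \<le> 1 \<and> q_norm e b < \<delta> \<longrightarrow> \<bar>g b\<bar> < \<eta>" if "\<eta> > 0" for \<eta>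
  proof -
    have "\<forall>a. L a \<le> 1 \<longrightarrow> (\<forall>\<epsilon>>0. \<exists>\<delta>>0. \<forall>b. L b \<le> 1 \<and> q_norm e (b - a) < \<delta>
        \<longrightarrow> \<bar>g b - g a\<bar> < \<epsilon>)" using f unfolding Af0_def g_def by blast
    then have "\<exists>\<delta>>0. \<forall>b. L b \<le> 1 \<and> q_norm e (b - 0) < \<delta> \<longrightarrow> \<bar>g b - g 0\<bar> < \<eta>"
      using L0 that by blast
    then show ?thesis using g0 by simp
  qed
  have gneg: "g (- a) = - g a" if "L a \<le> 1" for a
  proof -
    have La: "L (- a) \<le> 1" using that sem_facts(2)[OF sem] by simp
    have "(1/2::real) *\<^sub>R a + (1 - 1/2) *\<^sub>R (- a) = 0" by simp
    then have "g 0 = (1/2) * g a + (1 - 1/2) * g (- a)"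
      using aff[OF that La, of "1/2"] by simp
    then show ?thesis using g0 by simp
  qed
  obtain \<delta>1 where d1: "\<delta>1 > 0" "\<And>b. L b \<le> 1 \<Longrightarrow> q_norm e b < \<delta>1 \<Longrightarrow> \<bar>g b\<bar> < 1"
    using cont0[of 1] by auto
  obtain F where F: "finite F" "F \<subseteq> {a. L a \<le> 1}"
      "\<And>a. L a \<le> 1 \<Longrightarrow> \<exists>b\<in>F. q_norm e (a - b) < \<delta>1" using tb[OF d1(1)] by blast
  define Bd where "Bd = 2 + (\<Sum>b\<in>F. \<bar>g b\<bar>)"
  have Bd0: "Bd \<ge> 0" unfolding Bd_def by (simp add: sum_nonneg)
  have bound: "\<bar>g k\<bar> \<le> Bd" if k: "L k \<le> 1" for k
  proof -
    obtain b where b: "b \<in> F" "q_norm e (k - b) < \<delta>1" using F(3)[OF k] by blast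
    have Lb: "L b \<le> 1" using b F(2) by blast
    then have Lmb: "L (- b) \<le> 1" using sem_facts(2)[OF sem] by simp
    define z where "z = (1/2::real) *\<^sub>R k + (1 - 1/2) *\<^sub>R (- b)"
    have Lz: "L z \<le> 1" unfolding z_def by (rule sem_conv[OF sem k Lmb]) auto
    have "z = (1/2::real) *\<^sub>R (k - b)" unfolding z_def by (simp add: scaleR_diff_right)
    then have "q_norm e z = (1/2) * q_norm e (k - b)" using Q_scale[of "1/2" "k - b"] by simp
    then have "q_norm e z < \<delta>1" using b(2) Q_nonneg[of "k - b"] by simp
    then have gz: "\<bar>g z\<bar> < 1" using d1(2)[OF Lz] by blast
    have "g z = (1/2) * g k + (1 - 1/2) * g (- b)" unfolding z_def by (rule aff[OF k Lmb]) auto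
    then have "g z = (1/2) * g k - (1/2) * g b" using gneg[OF Lb] by simp
    then have "\<bar>g k\<bar> \<le> 2 + \<bar>g b\<bar>" using gz by linarith
    moreover have "\<bar>g b\<bar> \<le> (\<Sum>b\<in>F. \<bar>g b\<bar>)" using b(1) F(1) by (intro member_le_sum) auto
    ultimately show ?thesis unfolding Bd_def by linarith
  qed
  define \<epsilon>' where "\<epsilon>' = \<epsilon> / 2"
  have e': "\<epsilon>' > 0" "\<epsilon>' < \<epsilon>" using eps unfolding \<epsilon>'_def by auto
  obtain \<delta> where d: "\<delta> > 0" "\<And>b. L b \<le> 1 \<Longrightarrow> q_norm e b < \<delta> \<Longrightarrow> \<bar>g b\<bar> < \<epsilon>'"
    using cont0[OF e'(1)] by auto
  define M where "M = Bd / \<delta>"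
  have M0: "M \<ge> 0" unfolding M_def using Bd0 d(1) by simp
  have key: "0 \<le> g k + \<epsilon>' + M * q_norm e k" if k: "L k \<le> 1" for k
  proof (cases "q_norm e k < \<delta>")
    case True
    then have "\<bar>g k\<bar> < \<epsilon>'" using d(2)[OF k] by blast
    moreover have "0 \<le> M * q_norm e k" using M0 Q_nonneg by simp
    ultimately show ?thesis by linarith
  next
    case False
    then have "M * \<delta> \<le> M * q_norm e k" using M0 by (intro mult_left_mono) auto
    moreover have "M * \<delta> = Bd" unfolding M_def using d(1) by simp
    ultimately show ?thesis using bound[OF k] e'(1) by linarith
  qed
  define I where "I = {i :: real \<times> 'a. 0 \<le> fst i \<and> L (snd i) \<le> 1}"
  define \<phi> where "\<phi> x i = fst i * (g (snd i) + \<epsilon>') + M * q_norm e (x - fst i *\<^sub>R snd i)" for x i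
  define p where "p x = (INF i\<in>I. \<phi> x i)" for x
  have I0: "(0, 0) \<in> I" unfolding I_def using L0 by simp
  then have Ine: "I \<noteq> {}" by blast
  have phi0: "\<phi> x (0, 0) = M * q_norm e x" for x unfolding \<phi>_def by simp
  have lower: "- (M * q_norm e x) \<le> \<phi> x i" if i: "i \<in> I" for x i
  proof -
    obtain t k where tk: "i = (t, k)" by (cases i)
    have t: "0 \<le> t" and k: "L k \<le> 1" using i tk unfolding I_def by auto
    have "q_norm e (t *\<^sub>R k) \<le> q_norm e (t *\<^sub>R k - x) + q_norm e x"
      using Q_add[of "t *\<^sub>R k - x" x] by simp
    moreover have "q_norm e (t *\<^sub>R k - x) = q_norm e (x - t *\<^sub>R k)" by (rule Q_sym)
    moreover have "q_norm e (t *\<^sub>R k) = t * q_norm e k" using Q_scale0[OF t] .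
    ultimately have "t * q_norm e k - q_norm e x \<le> q_norm e (x - t *\<^sub>R k)" by linarith
    then have A: "M * (t * q_norm e k - q_norm e x) \<le> M * q_norm e (x - t *\<^sub>R k)"
      using M0 by (rule mult_left_mono)
    have B: "0 \<le> t * (g k + \<epsilon>' + M * q_norm e k)" using t key[OF k] by simp
    have e1: "M * (t * q_norm e k - q_norm e x) = t * (M * q_norm e k) - M * q_norm e x"
      by (simp add: algebra_simps)
    have e2: "t * (g k + \<epsilon>' + M * q_norm e k) = t * (g k + \<epsilon>') + t * (M * q_norm e k)"
      by (simp add: algebra_simps)
    have e3: "\<phi> x i = t * (g k + \<epsilon>') + M * q_norm e (x - t *\<^sub>R k)" unfolding \<phi>_def tk by simp
    have A': "t * (M * q_norm e k) - M * q_norm e x \<le> M * q_norm e (x - t *\<^sub>R k)" using A unfolding e1 .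
    have B': "0 \<le> t * (g k + \<epsilon>') + t * (M * q_norm e k)" using B unfolding e2 .
    show ?thesis unfolding e3 using A' B' by linarith
  qed
  have bddI: "bdd_below (\<phi> x ` I)" for x
  proof (rule bdd_belowI2)
    fix i assume "i \<in> I"
    then show "- (M * q_norm e x) \<le> \<phi> x i" by (rule lower)
  qed
  have p_le: "p x \<le> \<phi> x i" if "i \<in> I" for x i unfolding p_def using cINF_lower[OF bddI that] .
  have "sublin p" unfolding sublin_def
  proof (intro conjI allI impI)
    fix x y
    show "p (x + y) \<le> p x + p y" unfolding p_def
    proof (rule inf_subadd[OF Ine Ine bddI])
      fix i j assume i: "i \<in> I" and j: "j \<in> I"
      obtain t1 k1 where tk1: "i = (t1, k1)" by (cases i)
      obtain t2 k2 where tk2: "j = (t2, k2)" by (cases j)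
      have t1: "0 \<le> t1" and k1: "L k1 \<le> 1" using i tk1 unfolding I_def by auto
      have t2: "0 \<le> t2" and k2: "L k2 \<le> 1" using j tk2 unfolding I_def by auto
      show "\<exists>k\<in>I. \<phi> (x + y) k \<le> \<phi> x i + \<phi> y j"
      proof (cases "t1 + t2 = 0")
        case True
        then have "t1 = 0" "t2 = 0" using t1 t2 by auto
        then have "\<phi> x i + \<phi> y j = M * q_norm e x + M * q_norm e y" unfolding \<phi>_def tk1 tk2 by simp
        moreover have "M * q_norm e (x + y) \<le> M * (q_norm e x + q_norm e y)"
          using Q_add[of x y] M0 by (rule mult_left_mono)
        moreover have "M * (q_norm e x + q_norm e y) = M * q_norm e x + M * q_norm e y" by (rule distrib_left)
        ultimately have "\<phi> (x + y) (0, 0) \<le> \<phi> x i + \<phi> y j" using phi0[of "x + y"] by linarith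
        then show ?thesis using I0 by blast
      next
        case False
        define t where "t = t1 + t2"
        have tp: "t > 0" using False t1 t2 unfolding t_def by simp
        define s where "s = t1 / t"
        have s0: "0 \<le> s" unfolding s_def using t1 tp by simp
        have "t1 \<le> t" unfolding t_def using t2 by simp
        then have "t1 / t \<le> t / t" using tp by (intro divide_right_mono) auto
        then have s1: "s \<le> 1" unfolding s_def using tp by simp
        note s01 = s0 s1
        have ts1: "t * s = t1" unfolding s_def using tp by simp
        have ts2: "t * (1 - s) = t2" using ts1 unfolding t_def by (simp add: right_diff_distrib)
        note ts = ts1 ts2
        define k where "k = s *\<^sub>R k1 + (1 - s) *\<^sub>R k2"
        have Lk: "L k \<le> 1" unfolding k_def by (rule sem_conv[OF sem k1 k2 s01])
        have kI: "(t, k) \<in> I" unfolding I_def using Lk tp by simp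
        have gk: "t * g k = t1 * g k1 + t2 * g k2"
        proof -
          have "t * g k = (t * s) * g k1 + (t * (1 - s)) * g k2"
            unfolding k_def aff[OF k1 k2 s01] by (simp add: algebra_simps)
          then show ?thesis using ts by simp
        qed
        have tk: "t *\<^sub>R k = t1 *\<^sub>R k1 + t2 *\<^sub>R k2"
        proof -
          have "t *\<^sub>R k = (t * s) *\<^sub>R k1 + (t * (1 - s)) *\<^sub>R k2"
            unfolding k_def by (simp add: scaleR_add_right)
          then show ?thesis using ts by simp
        qed
        have eqx: "x + y - t *\<^sub>R k = (x - t1 *\<^sub>R k1) + (y - t2 *\<^sub>R k2)" unfolding tk by simp
        have "q_norm e (x + y - t *\<^sub>R k) \<le> q_norm e (x - t1 *\<^sub>R k1) + q_norm e (y - t2 *\<^sub>R k2)"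
          unfolding eqx by (rule Q_add)
        then have "M * q_norm e (x + y - t *\<^sub>R k) \<le> M * (q_norm e (x - t1 *\<^sub>R k1) + q_norm e (y - t2 *\<^sub>R k2))"
          using M0 by (rule mult_left_mono)
        also have "\<dots> = M * q_norm e (x - t1 *\<^sub>R k1) + M * q_norm e (y - t2 *\<^sub>R k2)" by (rule distrib_left)
        finally have A: "M * q_norm e (x + y - t *\<^sub>R k) \<le> M * q_norm e (x - t1 *\<^sub>R k1) + M * q_norm e (y - t2 *\<^sub>R k2)" .
        have d1: "t * (g k + \<epsilon>') = t * g k + t * \<epsilon>'" by (rule distrib_left)
        have d2: "t1 * (g k1 + \<epsilon>') = t1 * g k1 + t1 * \<epsilon>'" by (rule distrib_left)
        have d3: "t2 * (g k2 + \<epsilon>') = t2 * g k2 + t2 * \<epsilon>'" by (rule distrib_left)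
        have d4: "t * \<epsilon>' = t1 * \<epsilon>' + t2 * \<epsilon>'" unfolding t_def by (rule distrib_right)
        have p1: "\<phi> (x + y) (t, k) = t * (g k + \<epsilon>') + M * q_norm e (x + y - t *\<^sub>R k)" unfolding \<phi>_def by simp
        have p2: "\<phi> x i = t1 * (g k1 + \<epsilon>') + M * q_norm e (x - t1 *\<^sub>R k1)" unfolding \<phi>_def tk1 by simp
        have p3: "\<phi> y j = t2 * (g k2 + \<epsilon>') + M * q_norm e (y - t2 *\<^sub>R k2)" unfolding \<phi>_def tk2 by simp
        have "\<phi> (x + y) (t, k) \<le> \<phi> x i + \<phi> y j"
          unfolding p1 p2 p3 d1 d2 d3 using A gk d4 by linarith
        then show ?thesis using kI by blast
      qed
    qed
  next
    fix c :: real and x assume c: "c > 0"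
    have sc: "(INF i\<in>I. \<phi> (c *\<^sub>R x) i) = c * (INF i\<in>I. \<phi> x i)"
    proof (rule inf_scale[where h="\<phi> (c *\<^sub>R x)" and f="\<phi> x" and K=I and I=I])
      show "c > 0" by (rule c)
      show "I \<noteq> {}" by (rule Ine)
      show "bdd_below (\<phi> x ` I)" by (rule bddI)
      show "bdd_below (\<phi> (c *\<^sub>R x) ` I)" by (rule bddI)
    next
      fix i assume i: "i \<in> I"
      obtain t k where tk: "i = (t, k)" by (cases i)
      have t: "0 \<le> t" and k: "L k \<le> 1" using i tk unfolding I_def by auto
      have eqv: "c *\<^sub>R x - (c * t) *\<^sub>R k = c *\<^sub>R (x - t *\<^sub>R k)" by (simp add: scaleR_diff_right)
      have eqQ: "q_norm e (c *\<^sub>R x - (c * t) *\<^sub>R k) = c * q_norm e (x - t *\<^sub>R k)"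
        unfolding eqv by (rule Q_scale[OF c])
      have "\<phi> (c *\<^sub>R x) (c * t, k) = (c * t) * (g k + \<epsilon>') + M * q_norm e (c *\<^sub>R x - (c * t) *\<^sub>R k)"
        unfolding \<phi>_def fst_conv snd_conv ..
      also have "\<dots> = (c * t) * (g k + \<epsilon>') + M * (c * q_norm e (x - t *\<^sub>R k))" unfolding eqQ ..
      also have "\<dots> = c * (t * (g k + \<epsilon>') + M * q_norm e (x - t *\<^sub>R k))" by (rule ar1)
      also have "\<dots> = c * \<phi> x i" unfolding \<phi>_def tk fst_conv snd_conv ..
      finally have "\<phi> (c *\<^sub>R x) (c * t, k) \<le> c * \<phi> x i" by (rule eq_refl)
      moreover have "(c * t, k) \<in> I" unfolding I_def using t k c by simp
      ultimately show "\<exists>k\<in>I. \<phi> (c *\<^sub>R x) k \<le> c * \<phi> x i" by blast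
    next
      fix i assume i: "i \<in> I"
      obtain t k where tk: "i = (t, k)" by (cases i)
      have t: "0 \<le> t" and k: "L k \<le> 1" using i tk unfolding I_def by auto
      have eqv: "c *\<^sub>R (x - (t / c) *\<^sub>R k) = c *\<^sub>R x - t *\<^sub>R k" using c by (simp add: scaleR_diff_right)
      have eqQ: "c * q_norm e (x - (t / c) *\<^sub>R k) = q_norm e (c *\<^sub>R x - t *\<^sub>R k)"
        using Q_scale[OF c, of "x - (t / c) *\<^sub>R k"] unfolding eqv by (rule sym)
      have "c * \<phi> x (t / c, k) = c * ((t / c) * (g k + \<epsilon>') + M * q_norm e (x - (t / c) *\<^sub>R k))"
        unfolding \<phi>_def fst_conv snd_conv ..
      also have "\<dots> = t * (g k + \<epsilon>') + M * (c * q_norm e (x - (t / c) *\<^sub>R k))"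
        using c by (intro ar2) simp
      also have "\<dots> = t * (g k + \<epsilon>') + M * q_norm e (c *\<^sub>R x - t *\<^sub>R k)" unfolding eqQ ..
      also have "\<dots> = \<phi> (c *\<^sub>R x) i" unfolding \<phi>_def tk fst_conv snd_conv ..
      finally have "c * \<phi> x (t / c, k) \<le> \<phi> (c *\<^sub>R x) i" by (rule eq_refl)
      moreover have "(t / c, k) \<in> I" unfolding I_def using t k c by simp
      ultimately show "\<exists>j\<in>I. c * \<phi> x j \<le> \<phi> (c *\<^sub>R x) i" by blast
    qed
    then show "p (c *\<^sub>R x) = c * p x" unfolding p_def .
  qed
  then obtain l where lin: "linear l" and lp: "\<And>x. l x \<le> p x" using hahn_banach_sublin by blast
  have lQ: "l x \<le> M * q_norm e x" for x using lp[of x] p_le[OF I0, of x] phi0[of x] by simp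
  have labs: "\<bar>l x\<bar> \<le> M * q_norm e x" for x
    using lQ[of x] lQ[of "- x"] Q_neg[of x] lin_facts(4)[OF lin, of x] by simp
  have ldual: "l \<in> dual_space e"
  proof -
    have "\<bar>l a\<bar> \<le> M * ou_norm e a" for a
    proof -
      have "M * q_norm e a \<le> M * ou_norm e a" by (rule mult_left_mono[OF Q_le_N M0])
      then show ?thesis using labs[of a] by linarith
    qed
    then show ?thesis unfolding dual_space_def using lin by blast
  qed
  have le: "l e = 0" using labs[of e] Q_e by simp
  have approx: "\<bar>g k - l k\<bar> \<le> \<epsilon>'" if k: "L k \<le> 1" for k
  proof -
    have k1: "(1, k) \<in> I" unfolding I_def using k by simp
    have "l k \<le> \<phi> k (1, k)" using lp[of k] p_le[OF k1, of k] by simp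
    then have u: "l k \<le> g k + \<epsilon>'" unfolding \<phi>_def using Q_0 by simp
    have Lmk: "L (- k) \<le> 1" using k sem_facts(2)[OF sem] by simp
    have k2: "(1, - k) \<in> I" unfolding I_def using Lmk by simp
    have "l (- k) \<le> \<phi> (- k) (1, - k)" using lp[of "- k"] p_le[OF k2, of "- k"] by simp
    then have "l (- k) \<le> g (- k) + \<epsilon>'" unfolding \<phi>_def using Q_0 by simp
    then have "- l k \<le> - g k + \<epsilon>'" using gneg[OF k] lin_facts(4)[OF lin, of k] by simp
    with u show ?thesis by linarith
  qed
  have "\<bar>f X - dual_fun l X\<bar> < \<epsilon>" if XK: "X \<in> lipK e L" for X
  proof -
    obtain k where k: "X = coset e k" "L k \<le> 1" using XK unfolding lipK_def by blast
    have "dual_fun l X = l k" unfolding k(1) by (rule dual_fun_coset[OF lin le])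
    moreover have "f X = g k" unfolding k(1) g_def ..
    ultimately show ?thesis using approx[OF k(2)] e'(2) by simp
  qed
  then show ?thesis using ldual le by blast
qed

end


theorem proposition5p3:
  fixes e :: "'a::ordered_real_vector" and L :: "'a \<Rightarrow> real"
  assumes "order_unit e" and "closed_lip_norm e L"
  shows "(\<forall>l\<in>dual_space e. l e = 0 \<longrightarrow> dual_fun l \<in> Af0 e L) \<and>
         (\<forall>f\<in>Af0 e L. \<forall>\<epsilon>>0. \<exists>l\<in>dual_space e. l e = 0 \<and>
            (\<forall>X\<in>lipK e L. \<bar>f X - dual_fun l X\<bar> < \<epsilon>))"
proof (cases "0 \<le> e")
  case True
  interpret sane e using assms(1) True by unfold_locales
  have lip: "lip_norm e L" using assms(2) unfolding closed_lip_norm_def by blast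
  show ?thesis
  proof (intro conjI ballI allI impI)
    fix l assume "l \<in> dual_space e" "l e = 0"
    then show "dual_fun l \<in> Af0 e L" by (rule part1)
  next
    fix f :: "'a set \<Rightarrow> real" and \<epsilon> :: real assume "f \<in> Af0 e L" "\<epsilon> > 0"
    then show "\<exists>l\<in>dual_space e. l e = 0 \<and> (\<forall>X\<in>lipK e L. \<bar>f X - dual_fun l X\<bar> < \<epsilon>)"
      by (rule part2[OF lip])
  qed
next
  case False
  then have "\<forall>a. \<exists>t. a = t *\<^sub>R e" by (rule degen[OF assms(2)])
  then show ?thesis by (rule triv_case)
qed

end
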